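(* Let $A\colon X\to Y$ be a compact linear operator between separable Hilbert spaces with infinite-dimensional range, where $X=L^2(\mathcal{M})$, with singular value decomposition $Ax=\sum_{n=1}^\infty\sigma_n\langle x,v_n\rangle_X u_n$. Let $\eta>0$ and suppose that $$\sum_{n=1}^\infty\sigma_n^\eta\|v_n\|_{L^\infty(\mathcal{M})}^2<\infty.$$ Let $(c_n)_{n\in\mathbb{N}}$ be real numbers with $c_n\ge c_0>0$ for all $n$ and $c_n\le C\sigma_n^{-\beta}$ for all $n\in\mathbb{N}$, for some $C,\beta>0$. For $\alpha>0$ let $T^c_\alpha y=\sum_{n=1}^\infty\frac{\sigma_n}{\sigma_n^2+\alpha c_n}\langle y,u_n\rangle_Y v_n$. Let $y\in V_{2\eta+2\beta}$. Then there exists a constant $C'>0$ such that $$\|A^\dagger y-T^c_\alpha y\|_{L^\infty(\mathcal{M})}\le C'\alpha^{\min\{1,\eta/4\}}\qquad\text{for all }\alpha>0.$$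
   Context: $\mathcal{M}$ is a measure space. The SVD consists of orthonormal systems $(u_n)$ in $Y$ and $(v_n)$ in $X$ and a non-increasing sequence $(\sigma_n)$ of positive reals with $\sigma_n\to0$. The pseudoinverse is $A^\dagger y=\sum_{n}\sigma_n^{-1}\langle y,u_n\rangle_Y v_n$. For $\gamma\ge0$, $V_\gamma=\{y\in Y:\sum_{n=1}^\infty|\langle y,u_n\rangle_Y|^2\sigma_n^{-(2+\gamma)}<\infty\}$. *)

theory Defs
  imports "HOL-Probability.Probability"
begin

definition L2_mem :: "'a measure \<Rightarrow> ('a \<Rightarrow> real) \<Rightarrow> bool" where
  "L2_mem M f \<longleftrightarrow> f \<in> borel_measurable M \<and> integrable M (\<lambda>x. (f x)\<^sup>2)"

definition L2_inner :: "'a measure \<Rightarrow> ('a \<Rightarrow> real) \<Rightarrow> ('a \<Rightarrow> real) \<Rightarrow> real" where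
  "L2_inner M f g = (\<integral>x. f x * g x \<partial>M)"

definition L2_limit :: "'a measure \<Rightarrow> (nat \<Rightarrow> 'a \<Rightarrow> real) \<Rightarrow> ('a \<Rightarrow> real) \<Rightarrow> bool" where
  "L2_limit M s f \<longleftrightarrow> L2_mem M f \<and>
     ((\<lambda>N. \<integral>x. (f x - s N x)\<^sup>2 \<partial>M) \<longlonglongrightarrow> 0)"

definition Linf_norm :: "'a measure \<Rightarrow> ('a \<Rightarrow> real) \<Rightarrow> ereal" where
  "Linf_norm M f = esssup M (\<lambda>x. ereal \<bar>f x\<bar>)"

definition V_set :: "(nat \<Rightarrow> 'b::real_inner) \<Rightarrow> (nat \<Rightarrow> real) \<Rightarrow> real \<Rightarrow> 'b set" where
  "V_set u \<sigma> \<gamma> = {y. summable (\<lambda>n. (inner y (u n))\<^sup>2 * \<sigma> n powr (-(2 + \<gamma>)))}"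

definition pinv_partial :: "(nat \<Rightarrow> 'b::real_inner) \<Rightarrow> (nat \<Rightarrow> 'a \<Rightarrow> real) \<Rightarrow> (nat \<Rightarrow> real)
    \<Rightarrow> 'b \<Rightarrow> nat \<Rightarrow> 'a \<Rightarrow> real" where
  "pinv_partial u v \<sigma> y N = (\<lambda>x. \<Sum>n<N. (1 / \<sigma> n) * inner y (u n) * v n x)"

definition T_partial :: "(nat \<Rightarrow> 'b::real_inner) \<Rightarrow> (nat \<Rightarrow> 'a \<Rightarrow> real) \<Rightarrow> (nat \<Rightarrow> real)
    \<Rightarrow> (nat \<Rightarrow> real) \<Rightarrow> real \<Rightarrow> 'b \<Rightarrow> nat \<Rightarrow> 'a \<Rightarrow> real" where
  "T_partial u v \<sigma> c \<alpha> y N =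
     (\<lambda>x. \<Sum>n<N. (\<sigma> n / ((\<sigma> n)\<^sup>2 + \<alpha> * c n)) * inner y (u n) * v n x)"

end

theory Submission
  imports Defs
begin


lemma L2_add: "L2_mem M f \<Longrightarrow> L2_mem M g \<Longrightarrow> L2_mem M (\<lambda>x. f x + g x)"
proof -
  assume a: "L2_mem M f" "L2_mem M g"
  then have [measurable]: "f \<in> borel_measurable M" "g \<in> borel_measurable M"
    and i: "integrable M (\<lambda>x. (f x)\<^sup>2)" "integrable M (\<lambda>x. (g x)\<^sup>2)"
    by (auto simp: L2_mem_def)
  have "integrable M (\<lambda>x. (f x + g x)\<^sup>2)"
  proof (rule Bochner_Integration.integrable_bound[of _ "\<lambda>x. 2 * (f x)\<^sup>2 + 2 * (g x)\<^sup>2"])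
    show "integrable M (\<lambda>x. 2 * (f x)\<^sup>2 + 2 * (g x)\<^sup>2)" using i by auto
    show "(\<lambda>x. (f x + g x)\<^sup>2) \<in> borel_measurable M" by measurable
    show "AE x in M. norm ((f x + g x)\<^sup>2) \<le> norm (2 * (f x)\<^sup>2 + 2 * (g x)\<^sup>2)"
    proof (intro AE_I2)
      fix x
      have "(f x + g x)\<^sup>2 \<le> 2 * (f x)\<^sup>2 + 2 * (g x)\<^sup>2"
        using zero_le_square[of "f x - g x"] by (simp add: power2_eq_square algebra_simps)
      then show "norm ((f x + g x)\<^sup>2) \<le> norm (2 * (f x)\<^sup>2 + 2 * (g x)\<^sup>2)" by simp
    qed
  qed
  then show ?thesis by (simp add: L2_mem_def)
qed

lemma L2_scale: "L2_mem M f \<Longrightarrow> L2_mem M (\<lambda>x. c * f x)"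
  unfolding L2_mem_def by (auto simp: power_mult_distrib)

lemma L2_diff: "L2_mem M f \<Longrightarrow> L2_mem M g \<Longrightarrow> L2_mem M (\<lambda>x. f x - g x)"
  using L2_add[of M f "\<lambda>x. (-1) * g x"] L2_scale[of M g "-1"] by simp

lemma L2_sum: "(\<And>n. n \<in> S \<Longrightarrow> L2_mem M (h n)) \<Longrightarrow> L2_mem M (\<lambda>x. \<Sum>n\<in>S. h n x)"
proof (induction S rule: infinite_finite_induct)
  case (infinite A) then show ?case by (simp add: L2_mem_def)
next
  case empty then show ?case by (simp add: L2_mem_def)
next
  case (insert x F) then show ?case by (simp add: L2_add)
qed

lemma approx_bound:
  fixes h :: "'a \<Rightarrow> real"
  assumes h: "L2_mem M h" and d: "\<And>N. L2_mem M (d N)"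
    and dB: "\<And>N. AE x in M. \<bar>d N x\<bar> \<le> B"
    and conv: "\<And>\<delta>. \<delta> > 0 \<Longrightarrow> \<exists>N. (\<integral>x. (h x - d N x)\<^sup>2 \<partial>M) < \<delta>"
  shows "AE x in M. \<bar>h x\<bar> \<le> B"
proof -
  have hm[measurable]: "h \<in> borel_measurable M" using h by (simp add: L2_mem_def)
  have dm[measurable]: "d N \<in> borel_measurable M" for N using d by (simp add: L2_mem_def)
  have eps: "AE x in M. \<bar>h x\<bar> \<le> B + \<epsilon>" if ep: "\<epsilon> > 0" for \<epsilon>
  proof -
    define T where "T = {x\<in>space M. \<not> \<bar>h x\<bar> \<le> B + \<epsilon>}"
    have Tm: "T \<in> sets M" unfolding T_def by measurable
    have le: "emeasure M T \<le> ennreal e" if e: "e > 0" for e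
    proof -
      obtain N where N: "(\<integral>x. (h x - d N x)\<^sup>2 \<partial>M) < e * \<epsilon>\<^sup>2"
        using conv[of "e * \<epsilon>\<^sup>2"] e ep by auto
      have int: "integrable M (\<lambda>x. (h x - d N x)\<^sup>2)"
        using L2_diff[OF h d[of N]] by (simp add: L2_mem_def)
      have "emeasure M T \<le> emeasure M {x\<in>space M. (h x - d N x)\<^sup>2 \<ge> \<epsilon>\<^sup>2}"
      proof (rule emeasure_mono_AE)
        show "{x\<in>space M. (h x - d N x)\<^sup>2 \<ge> \<epsilon>\<^sup>2} \<in> sets M" by measurable
        show "AE x in M. x \<in> T \<longrightarrow> x \<in> {x\<in>space M. (h x - d N x)\<^sup>2 \<ge> \<epsilon>\<^sup>2}"
          using dB[of N]
        proof eventually_elim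
          case (elim x)
          show ?case
          proof
            assume "x \<in> T"
            then have "\<bar>h x\<bar> > B + \<epsilon>" "x \<in> space M" unfolding T_def by auto
            then have "\<bar>h x - d N x\<bar> \<ge> \<epsilon>" using elim by linarith
            then have "\<epsilon>\<^sup>2 \<le> \<bar>h x - d N x\<bar>\<^sup>2" using ep by (intro power_mono) auto
            then show "x \<in> {x\<in>space M. (h x - d N x)\<^sup>2 \<ge> \<epsilon>\<^sup>2}" using \<open>x \<in> space M\<close> by simp
          qed
        qed
      qed
      also have "\<dots> \<le> ennreal ((1 / \<epsilon>\<^sup>2) * (\<integral>x. (h x - d N x)\<^sup>2 \<partial>M))"
        by (rule integral_Markov_inequality) (use int ep in auto)
      also have "\<dots> \<le> ennreal e"
      proof (rule ennreal_leI)
        have "(\<integral>x. (h x - d N x)\<^sup>2 \<partial>M) \<le> e * \<epsilon>\<^sup>2" using N by simp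
        then show "1 / \<epsilon>\<^sup>2 * (\<integral>x. (h x - d N x)\<^sup>2 \<partial>M) \<le> e"
          using ep by (simp add: field_simps)
      qed
      finally show ?thesis .
    qed
    have "emeasure M T \<le> 0"
      by (rule ennreal_le_epsilon) (use le in simp)
    then have "emeasure M T = 0" by simp
    then show ?thesis using AE_iff_measurable[OF Tm T_def[symmetric]] by simp
  qed
  have "AE x in M. \<forall>k::nat. \<bar>h x\<bar> \<le> B + 1 / Suc k"
    unfolding AE_all_countable using eps by simp
  then show ?thesis
  proof eventually_elim
    case (elim x)
    show ?case
    proof (rule ccontr)
      assume "\<not> \<bar>h x\<bar> \<le> B"
      then obtain k where "inverse (real (Suc k)) < \<bar>h x\<bar> - B"
        using ex_inverse_of_nat_less[of "\<bar>h x\<bar> - B"] by (metis diff_gt_0_iff_gt gr0_implies_Suc linorder_not_le)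
      then show False using elim[rule_format, of k] by (simp add: field_simps)
    qed
  qed
qed



lemma coef_bound:
  fixes s s0 \<alpha> cc C \<beta> \<eta> yy :: real
  assumes s: "s > 0" "s \<le> s0" and al: "\<alpha> > 0" and cc: "cc > 0" "cc \<le> C * s powr (-\<beta>)"
    and C: "C > 0" and be: "\<beta> > 0" and et: "\<eta> > 0"
  defines "t \<equiv> min 1 (\<eta> / 4)"
  shows "((1 / s - s / (s\<^sup>2 + \<alpha> * cc)) * yy)\<^sup>2 / s powr \<eta>
     \<le> \<alpha> powr (2 * t) * (C powr (2 * t) * s0 powr ((2 + (2 * \<eta> + 2 * \<beta>)) - (4 * t + 2 * \<beta> * t + 2 + \<eta>)))
        * (yy\<^sup>2 * s powr (-(2 + (2 * \<eta> + 2 * \<beta>))))"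
proof -
  define r where "r = \<alpha> * cc / (s\<^sup>2 + \<alpha> * cc)"
  define p where "p = 4 * t + 2 * \<beta> * t + 2 + \<eta>"
  define q where "q = 2 + (2 * \<eta> + 2 * \<beta>)"
  have t: "0 < t" "t \<le> 1" "4 * t \<le> \<eta>" using et unfolding t_def by auto
  have pq: "p \<le> q" unfolding p_def q_def using t be
    by (smt (verit, ccfv_SIG) mult_left_le mult_pos_pos)
  have den: "s\<^sup>2 + \<alpha> * cc > 0" using s al cc by (simp add: add_pos_pos)
  have r0: "r > 0" unfolding r_def using al cc den by simp
  have r1: "r \<le> 1" unfolding r_def using den s by simp
  have r2: "r \<le> \<alpha> * cc / s\<^sup>2" unfolding r_def using al cc s
    by (intro divide_left_mono) (auto simp: add_pos_pos)
  have eq1: "1 / s - s / (s\<^sup>2 + \<alpha> * cc) = r / s"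
  proof -
    have "s\<^sup>2 + \<alpha> * cc \<noteq> 0" using den by simp
    then show ?thesis unfolding r_def using s by (simp add: field_simps) (simp add: power2_eq_square)
  qed
  have LHS: "((1 / s - s / (s\<^sup>2 + \<alpha> * cc)) * yy)\<^sup>2 / s powr \<eta> = r powr 2 * yy\<^sup>2 * s powr (-(2 + \<eta>))"
  proof -
    have a: "r powr 2 = r ^ 2" using r0 by (simp add: powr_numeral)
    have b: "s powr (2 + \<eta>) = s ^ 2 * s powr \<eta>" using s by (simp add: powr_add powr_numeral)
    have c: "s powr (-(2 + \<eta>)) = inverse (s powr (2 + \<eta>))" by (rule powr_minus)
    show ?thesis unfolding eq1 a c b
      by (simp add: power_mult_distrib power_divide divide_inverse mult_ac power_inverse)
  qed
  have "r powr 2 \<le> r powr (2 * t)"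
    by (rule powr_mono') (use r0 r1 t in auto)
  also have "\<dots> \<le> (\<alpha> * cc / s\<^sup>2) powr (2 * t)"
    by (rule powr_mono2) (use r0 r2 t in auto)
  also have "\<dots> = \<alpha> powr (2 * t) * cc powr (2 * t) * s powr (- 4 * t)"
  proof -
    have s2: "s\<^sup>2 = s powr 2" using s by (simp add: powr_numeral)
    have "(s\<^sup>2) powr (2 * t) = s powr (2 * (2 * t))" unfolding s2 by (rule powr_powr)
    then have e1: "(s\<^sup>2) powr (2 * t) = s powr (4 * t)" by simp
    have "(\<alpha> * cc / s\<^sup>2) powr (2 * t) = (\<alpha> * cc) powr (2 * t) / (s\<^sup>2) powr (2 * t)"
      by (rule powr_divide)
    also have "(\<alpha> * cc) powr (2 * t) = \<alpha> powr (2 * t) * cc powr (2 * t)"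
      by (rule powr_mult)
    also have "1 / s powr (4 * t) = s powr (- (4 * t))" by (rule powr_minus_divide[symmetric])
    ultimately show ?thesis unfolding e1 by (simp add: divide_inverse powr_minus)
  qed
  also have "\<dots> \<le> \<alpha> powr (2 * t) * (C powr (2 * t) * s powr (- 2 * \<beta> * t)) * s powr (- 4 * t)"
  proof -
    have "cc powr (2 * t) \<le> (C * s powr (-\<beta>)) powr (2 * t)"
      by (rule powr_mono2) (use cc t in auto)
    also have "(C * s powr (-\<beta>)) powr (2 * t) = C powr (2 * t) * (s powr (-\<beta>)) powr (2 * t)"
      by (rule powr_mult)
    also have "(s powr (-\<beta>)) powr (2 * t) = s powr (- 2 * \<beta> * t)"
      by (simp add: powr_powr mult_ac)
    finally have "cc powr (2 * t) \<le> C powr (2 * t) * s powr (- 2 * \<beta> * t)" .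
    then show ?thesis by (intro mult_right_mono mult_left_mono) auto
  qed
  finally have rb0: "r powr 2 \<le> \<alpha> powr (2 * t) * (C powr (2 * t) * s powr (- 2 * \<beta> * t)) * s powr (- 4 * t)" .
  have "s powr (- 2 * \<beta> * t) * s powr (- 4 * t) = s powr (- 4 * t - 2 * \<beta> * t)"
    by (simp add: powr_add[symmetric] algebra_simps)
  then have rb: "r powr 2 \<le> \<alpha> powr (2 * t) * C powr (2 * t) * s powr (- 4 * t - 2 * \<beta> * t)"
    using rb0 by (simp add: mult_ac)
  have "r powr 2 * yy\<^sup>2 * s powr (-(2 + \<eta>))
      \<le> (\<alpha> powr (2 * t) * C powr (2 * t) * s powr (- 4 * t - 2 * \<beta> * t)) * yy\<^sup>2 * s powr (-(2 + \<eta>))"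
    by (intro mult_right_mono rb) auto
  also have "\<dots> = \<alpha> powr (2 * t) * C powr (2 * t) * yy\<^sup>2 * s powr (- p)"
    using s unfolding p_def by (simp add: powr_add[symmetric] mult_ac algebra_simps)
  also have "s powr (- p) = s powr (q - p) * s powr (- q)"
    using s by (simp add: powr_add[symmetric])
  also have "s powr (q - p) \<le> s0 powr (q - p)"
    by (rule powr_mono2) (use s pq in auto)
  then have "\<alpha> powr (2 * t) * C powr (2 * t) * yy\<^sup>2 * (s powr (q - p) * s powr (- q))
      \<le> \<alpha> powr (2 * t) * C powr (2 * t) * yy\<^sup>2 * (s0 powr (q - p) * s powr (- q))"
    by (intro mult_left_mono mult_right_mono) auto
  finally show ?thesis unfolding LHS p_def[symmetric] q_def[symmetric] by (simp add: mult_ac)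
qed



theorem theorem4p12:
  fixes M :: "'a measure"
    and A :: "('a \<Rightarrow> real) \<Rightarrow> 'b::{real_inner, complete_space}"
    and u :: "nat \<Rightarrow> 'b" and v :: "nat \<Rightarrow> 'a \<Rightarrow> real" and \<sigma> :: "nat \<Rightarrow> real"
    and \<eta> \<beta> C c0 :: real and c :: "nat \<Rightarrow> real" and y :: 'b
  assumes u_orth: "\<And>n m. inner (u n) (u m) = (if n = m then 1 else 0)"
    and v_L2: "\<And>n. L2_mem M (v n)"
    and v_orth: "\<And>n m. L2_inner M (v n) (v m) = (if n = m then 1 else 0)"
    and \<sigma>_pos: "\<And>n. \<sigma> n > 0"
    and \<sigma>_dec: "decseq \<sigma>"
    and \<sigma>_lim: "\<sigma> \<longlonglongrightarrow> 0"
    and A_svd: "\<And>f. L2_mem M f \<Longrightarrow>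
                 (\<lambda>N. \<Sum>n<N. (\<sigma> n * L2_inner M f (v n)) *\<^sub>R u n) \<longlonglongrightarrow> A f"
    and \<eta>_pos: "\<eta> > 0"
    and v_Linf_fin: "\<And>n. Linf_norm M (v n) < \<infinity>"
    and v_sum: "summable (\<lambda>n. \<sigma> n powr \<eta> * (real_of_ereal (Linf_norm M (v n)))\<^sup>2)"
    and c0_pos: "c0 > 0" and c_lower: "\<And>n. c n \<ge> c0"
    and C_pos: "C > 0" and \<beta>_pos: "\<beta> > 0"
    and c_upper: "\<And>n. c n \<le> C * \<sigma> n powr (-\<beta>)"
    and y_V: "y \<in> V_set u \<sigma> (2 * \<eta> + 2 * \<beta>)"
  shows "\<exists>C'>0. \<forall>\<alpha>>0. \<forall>f g.
           L2_limit M (pinv_partial u v \<sigma> y) f \<longrightarrow>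
           L2_limit M (T_partial u v \<sigma> c \<alpha> y) g \<longrightarrow>
           Linf_norm M (\<lambda>x. f x - g x) \<le> ereal (C' * \<alpha> powr (min 1 (\<eta> / 4)))"
proof -
  define t where "t = min 1 (\<eta> / 4)"
  define L where "L n = \<bar>real_of_ereal (Linf_norm M (v n))\<bar>" for n
  define yv where "yv n = inner y (u n)" for n
  define s0 where "s0 = \<sigma> 0"
  define D where "D = C powr (2 * t) * s0 powr ((2 + (2 * \<eta> + 2 * \<beta>)) - (4 * t + 2 * \<beta> * t + 2 + \<eta>))"
  define K where "K n = D * ((yv n)\<^sup>2 * \<sigma> n powr (-(2 + (2 * \<eta> + 2 * \<beta>))))" for n
  define W where "W n = \<sigma> n powr \<eta> * (L n)\<^sup>2" for n
  have L0: "L n \<ge> 0" for n unfolding L_def by (rule abs_ge_zero)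
  have K0: "K n \<ge> 0" for n unfolding K_def D_def by simp
  have W0: "W n \<ge> 0" for n unfolding W_def by simp
  have Ksum: "summable K"
    using y_V unfolding K_def V_set_def yv_def by (intro summable_mult) simp
  have Wsum: "summable W"
    using v_sum unfolding W_def L_def power2_abs .
  define C' where "C' = (suminf W + suminf K) / 2 + 1"
  have Wn: "0 \<le> suminf W" by (rule suminf_nonneg[OF Wsum W0])
  have Kn: "0 \<le> suminf K" by (rule suminf_nonneg[OF Ksum K0])
  have C'pos: "C' > 0" unfolding C'_def
    by (intro add_nonneg_pos divide_nonneg_pos add_nonneg_nonneg Wn Kn) auto

  have s0: "\<sigma> n \<le> s0" for n unfolding s0_def using \<sigma>_dec by (simp add: decseq_def)
  have vAE: "AE x in M. \<forall>n. \<bar>v n x\<bar> \<le> L n"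
    unfolding AE_all_countable
  proof
    fix n
    have ae: "AE x in M. ereal \<bar>v n x\<bar> \<le> Linf_norm M (v n)"
      unfolding Linf_norm_def by (rule esssup_AE)
    show "AE x in M. \<bar>v n x\<bar> \<le> L n"
    proof (cases "Linf_norm M (v n)")
      case (real r)
      from ae show ?thesis
        by eventually_elim (use real in \<open>auto simp: L_def\<close>)
    next
      case PInf then show ?thesis using v_Linf_fin[of n] by simp
    next
      case MInf
      from ae show ?thesis by eventually_elim (use MInf in simp)
    qed
  qed
  show ?thesis
  proof (intro exI[of _ C'] conjI allI impI C'pos)
    fix \<alpha> :: real and f g
    assume al: "\<alpha> > 0"
    assume fl: "L2_limit M (pinv_partial u v \<sigma> y) f"
    assume gl: "L2_limit M (T_partial u v \<sigma> c \<alpha> y) g"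
    define a where "a n = (1 / \<sigma> n - \<sigma> n / ((\<sigma> n)\<^sup>2 + \<alpha> * c n)) * yv n" for n
    define lam where "lam = \<alpha> powr t"
    have lam: "lam > 0" unfolding lam_def using al by simp
    have cpos: "c n > 0" for n using c_lower[of n] c0_pos by linarith
    have key: "\<bar>a n\<bar> * L n \<le> lam * ((W n + K n) / 2)" for n
    proof -
      define P where "P = \<sigma> n powr \<eta>"
      have P: "P > 0" unfolding P_def using \<sigma>_pos[of n] by simp
      have cb: "(a n)\<^sup>2 / P \<le> \<alpha> powr (2 * t) * K n"
        unfolding a_def P_def K_def D_def t_def
        using coef_bound[OF \<sigma>_pos[of n] s0[of n] al cpos[of n] c_upper[of n] C_pos \<beta>_pos \<eta>_pos]
        by (simp add: mult_ac)
      have "\<alpha> powr (2 * t) = lam * lam" unfolding lam_def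
        by (simp add: powr_add[symmetric])
      then have cb2: "(a n)\<^sup>2 / (lam * P) \<le> lam * K n"
        using cb lam P by (simp add: field_simps)
      have amgm: "\<bar>a n\<bar> * L n \<le> (lam * P * (L n)\<^sup>2 + (a n)\<^sup>2 / (lam * P)) / 2"
      proof -
        have "0 \<le> (lam * P * L n - \<bar>a n\<bar>)\<^sup>2" by simp
        then have "2 * (lam * P) * (\<bar>a n\<bar> * L n) \<le> (lam * P) * (lam * P * (L n)\<^sup>2) + (a n)\<^sup>2"
          by (simp add: power2_eq_square algebra_simps)
        then show ?thesis using lam P by (simp add: field_simps)
      qed
      also have "\<dots> \<le> (lam * P * (L n)\<^sup>2 + lam * K n) / 2" using cb2 by (intro divide_right_mono add_left_mono) simp_all
      finally show ?thesis unfolding W_def P_def by (simp add: algebra_simps)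
    qed
    have aL0: "\<bar>a n\<bar> * L n \<ge> 0" for n using L0 by simp
    have aLsum: "summable (\<lambda>n. \<bar>a n\<bar> * L n)"
      by (rule summable_comparison_test[of _ "\<lambda>n. lam * ((W n + K n) / 2)"])
         (use key aL0 Wsum Ksum in \<open>auto intro!: summable_mult summable_divide summable_add\<close>)
    define B where "B = (\<Sum>n. \<bar>a n\<bar> * L n)"
    have B_le: "B \<le> lam * ((suminf W + suminf K) / 2)"
    proof -
      have "B \<le> (\<Sum>n. lam * ((W n + K n) / 2))"
        unfolding B_def by (rule suminf_le) (use key aLsum Wsum Ksum in \<open>auto intro!: summable_mult summable_divide summable_add\<close>)
      also have "\<dots> = lam * ((suminf W + suminf K) / 2)"
        using Wsum Ksum by (simp add: suminf_mult suminf_divide suminf_add summable_add)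
      finally show ?thesis .
    qed
    define d where "d N x = (\<Sum>n<N. a n * v n x)" for N x
    have d_eq: "d N x = pinv_partial u v \<sigma> y N x - T_partial u v \<sigma> c \<alpha> y N x" for N x
      unfolding d_def pinv_partial_def T_partial_def a_def yv_def
      by (simp add: sum_subtractf[symmetric] algebra_simps)
    have dL2: "L2_mem M (d N)" for N
      unfolding d_def by (intro L2_sum L2_scale v_L2)
    have pL2: "L2_mem M (pinv_partial u v \<sigma> y N)" for N
      unfolding pinv_partial_def by (intro L2_sum L2_scale v_L2)
    have tL2: "L2_mem M (T_partial u v \<sigma> c \<alpha> y N)" for N
      unfolding T_partial_def by (intro L2_sum L2_scale v_L2)
    have fL2: "L2_mem M f" and gL2: "L2_mem M g" using fl gl by (auto simp: L2_limit_def)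
    have hL2: "L2_mem M (\<lambda>x. f x - g x)" by (rule L2_diff[OF fL2 gL2])
    have dB: "AE x in M. \<bar>d N x\<bar> \<le> B" for N
      using vAE
    proof eventually_elim
      case (elim x)
      have "\<bar>d N x\<bar> \<le> (\<Sum>n<N. \<bar>a n * v n x\<bar>)" unfolding d_def by (rule sum_abs)
      also have "\<dots> \<le> (\<Sum>n<N. \<bar>a n\<bar> * L n)"
        by (intro sum_mono) (use elim in \<open>auto simp: abs_mult intro: mult_left_mono\<close>)
      also have "\<dots> \<le> B" unfolding B_def
        by (rule sum_le_suminf[OF aLsum]) (use aL0 in auto)
      finally show ?case .
    qed
    have conv: "\<exists>N. (\<integral>x. ((f x - g x) - d N x)\<^sup>2 \<partial>M) < \<delta>" if dl: "\<delta> > 0" for \<delta>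
    proof -
      have t1: "(\<lambda>N. \<integral>x. (f x - pinv_partial u v \<sigma> y N x)\<^sup>2 \<partial>M) \<longlonglongrightarrow> 0"
        using fl by (simp add: L2_limit_def)
      have t2: "(\<lambda>N. \<integral>x. (g x - T_partial u v \<sigma> c \<alpha> y N x)\<^sup>2 \<partial>M) \<longlonglongrightarrow> 0"
        using gl by (simp add: L2_limit_def)
      have "eventually (\<lambda>N. (\<integral>x. (f x - pinv_partial u v \<sigma> y N x)\<^sup>2 \<partial>M) < \<delta> / 4) sequentially"
        by (rule order_tendstoD(2)[OF t1]) (use dl in simp)
      moreover have "eventually (\<lambda>N. (\<integral>x. (g x - T_partial u v \<sigma> c \<alpha> y N x)\<^sup>2 \<partial>M) < \<delta> / 4) sequentially"
        by (rule order_tendstoD(2)[OF t2]) (use dl in simp)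
      ultimately obtain N where
        N1: "(\<integral>x. (f x - pinv_partial u v \<sigma> y N x)\<^sup>2 \<partial>M) < \<delta> / 4" and
        N2: "(\<integral>x. (g x - T_partial u v \<sigma> c \<alpha> y N x)\<^sup>2 \<partial>M) < \<delta> / 4"
        using eventually_sequentially by (metis (no_types, lifting) eventually_conj_iff order_refl)
      have i1: "integrable M (\<lambda>x. (f x - pinv_partial u v \<sigma> y N x)\<^sup>2)"
        using L2_diff[OF fL2 pL2[of N]] by (simp add: L2_mem_def)
      have i2: "integrable M (\<lambda>x. (g x - T_partial u v \<sigma> c \<alpha> y N x)\<^sup>2)"
        using L2_diff[OF gL2 tL2[of N]] by (simp add: L2_mem_def)
      have i3: "integrable M (\<lambda>x. ((f x - g x) - d N x)\<^sup>2)"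
        using L2_diff[OF hL2 dL2[of N]] by (simp add: L2_mem_def)
      have "(\<integral>x. ((f x - g x) - d N x)\<^sup>2 \<partial>M)
          \<le> (\<integral>x. 2 * (f x - pinv_partial u v \<sigma> y N x)\<^sup>2 + 2 * (g x - T_partial u v \<sigma> c \<alpha> y N x)\<^sup>2 \<partial>M)"
      proof (rule integral_mono)
        show "integrable M (\<lambda>x. ((f x - g x) - d N x)\<^sup>2)" by (rule i3)
        show "integrable M (\<lambda>x. 2 * (f x - pinv_partial u v \<sigma> y N x)\<^sup>2 + 2 * (g x - T_partial u v \<sigma> c \<alpha> y N x)\<^sup>2)"
          using i1 i2 by auto
        fix x
        define p where "p = f x - pinv_partial u v \<sigma> y N x"
        define q where "q = g x - T_partial u v \<sigma> c \<alpha> y N x"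
        have e: "(f x - g x) - d N x = p - q" unfolding p_def q_def d_eq by simp
        have ineq: "(p - q)\<^sup>2 \<le> 2 * p\<^sup>2 + 2 * q\<^sup>2"
          using zero_le_square[of "p + q"] by (simp add: power2_eq_square algebra_simps)
        show "((f x - g x) - d N x)\<^sup>2 \<le> 2 * (f x - pinv_partial u v \<sigma> y N x)\<^sup>2 + 2 * (g x - T_partial u v \<sigma> c \<alpha> y N x)\<^sup>2"
          unfolding e p_def[symmetric] q_def[symmetric] by (rule ineq)
      qed
      also have "\<dots> = 2 * (\<integral>x. (f x - pinv_partial u v \<sigma> y N x)\<^sup>2 \<partial>M) + 2 * (\<integral>x. (g x - T_partial u v \<sigma> c \<alpha> y N x)\<^sup>2 \<partial>M)"
        using i1 i2 by simp
      also have "\<dots> < \<delta>" using N1 N2 by simp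
      finally show ?thesis by blast
    qed
    have hAE: "AE x in M. \<bar>f x - g x\<bar> \<le> B"
      by (rule approx_bound[OF hL2 dL2 dB conv])
    have hm[measurable]: "(\<lambda>x. f x - g x) \<in> borel_measurable M" using hL2 by (simp add: L2_mem_def)
    have "Linf_norm M (\<lambda>x. f x - g x) \<le> ereal B"
      unfolding Linf_norm_def
    proof (rule esssup_I)
      show "(\<lambda>x. ereal \<bar>f x - g x\<bar>) \<in> borel_measurable M" by measurable
      show "AE x in M. ereal \<bar>f x - g x\<bar> \<le> ereal B" using hAE by simp
    qed
    also have "B \<le> C' * \<alpha> powr (min 1 (\<eta> / 4))"
    proof -
      have "B \<le> lam * ((suminf W + suminf K) / 2)" by (rule B_le)
      also have "\<dots> \<le> lam * C'" unfolding C'_def using lam by (intro mult_left_mono) auto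
      finally show ?thesis unfolding lam_def t_def by (simp add: mult_ac)
    qed
    then have "ereal B \<le> ereal (C' * \<alpha> powr (min 1 (\<eta> / 4)))" by simp
    finally show "Linf_norm M (\<lambda>x. f x - g x) \<le> ereal (C' * \<alpha> powr (min 1 (\<eta> / 4)))" .
  qed
qed

end
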